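(* Let $A\in\mathbb{Z}^{d\times n}$, $\mathbf{b}\in\mathbb{Z}^d$, $\mathbf{c}\in\mathbb{Z}^n$, $\mathbf{u}\in\mathbb{Z}_{\ge0}^n$, and consider the LP $\min\{\mathbf{c}^\top\mathbf{x} : A\mathbf{x}=\mathbf{b},\ \mathbf{0}\le\mathbf{x}\le\mathbf{u},\ \mathbf{x}\in\mathbb{R}^n\}$. Then: (i) for every feasible $\mathbf{x}$ and every $\mathbf{z}\in\mathbb{R}^n\setminus\{\mathbf{0}\}$ with $A\mathbf{z}=\mathbf{0}$ and $\mathbf{x}+\epsilon\mathbf{z}$ feasible for some $\epsilon>0$, there exists $\mathbf{g}\in\mathcal{C}(A)$ with $\mathbf{x}+\epsilon'\mathbf{g}$ feasible for some $\epsilon'>0$ and $-\mathbf{c}^\top\mathbf{g}/\|\mathbf{g}\|_1\ge-\mathbf{c}^\top\mathbf{z}/\|\mathbf{z}\|_1$; hence a discrete steepest-descent direction is a steepest-descent direction among all applicable real directions; (ii) from any feasible solution $\mathbf{x}_0$, every sequence of discrete steepest-descent augmentations reaches an optimal solution after at most $|\mathcal{C}(A)|$ augmentations.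
   Context: Feasible solutions are the $\mathbf{x}\in\mathbb{R}^n$ with $A\mathbf{x}=\mathbf{b}$, $\mathbf{0}\le\mathbf{x}\le\mathbf{u}$. The circuits $\mathcal{C}(A)$: for each nonzero $\mathbf{z}\in\ker(A)$ whose support is inclusion-minimal among supports of nonzero vectors of $\ker(A)$, the line $\mathbb{R}\mathbf{z}$ contains exactly two nonzero integer points closest to the origin; $\mathcal{C}(A)$ is the finite set of all these vectors. Discrete steepest-descent augmentation (LP): given a feasible $\mathbf{x}_k$, choose $\mathbf{z}\in\mathcal{C}(A)$ maximizing $-\mathbf{c}^\top\mathbf{z}/\|\mathbf{z}\|_1$ among all $\mathbf{z}\in\mathcal{C}(A)$ such that $\mathbf{x}_k+\epsilon\mathbf{z}$ is feasible for some $\epsilon>0$; if this maximum is positive, let $\alpha$ be the largest real number with $\mathbf{x}_k+\alpha\mathbf{z}$ feasible and set $\mathbf{x}_{k+1}:=\mathbf{x}_k+\alpha\mathbf{z}$, otherwise stop. *)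

theory Defs
  imports "HOL-Analysis.Analysis"
begin

definition rvec :: "int^'n \<Rightarrow> real^'n" where
  "rvec v = (\<chi> i. real_of_int (v $ i))"

definition rmat :: "int^'n^'d \<Rightarrow> real^'n^'d" where
  "rmat A = (\<chi> i j. real_of_int (A $ i $ j))"

definition supp :: "real^'n \<Rightarrow> 'n set" where
  "supp z = {i. z $ i \<noteq> 0}"

definition feasible :: "int^'n^'d \<Rightarrow> int^'d \<Rightarrow> int^'n \<Rightarrow> real^'n \<Rightarrow> bool" where
  "feasible A b u x \<longleftrightarrow> rmat A *v x = rvec b \<and> (\<forall>i. 0 \<le> x $ i \<and> x $ i \<le> real_of_int (u $ i))"

definition min_supp_kernel :: "int^'n^'d \<Rightarrow> real^'n \<Rightarrow> bool" where
  "min_supp_kernel A z \<longleftrightarrow> z \<noteq> 0 \<and> rmat A *v z = 0 \<and>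
     (\<forall>w. w \<noteq> 0 \<and> rmat A *v w = 0 \<and> supp w \<subseteq> supp z \<longrightarrow> supp w = supp z)"

definition circuits :: "int^'n^'d \<Rightarrow> (int^'n) set" where
  "circuits A = {g. \<exists>z. min_supp_kernel A z \<and> g \<noteq> 0 \<and> (\<exists>t::real. rvec g = t *\<^sub>R z) \<and>
       (\<forall>h::int^'n. h \<noteq> 0 \<and> (\<exists>t::real. rvec h = t *\<^sub>R z) \<longrightarrow> norm (rvec g) \<le> norm (rvec h))}"

definition norm1 :: "real^'n \<Rightarrow> real" where
  "norm1 z = (\<Sum>i\<in>UNIV. \<bar>z $ i\<bar>)"

definition ratio :: "int^'n \<Rightarrow> real^'n \<Rightarrow> real" where
  "ratio c z = - (rvec c \<bullet> z) / norm1 z"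

definition applicable :: "int^'n^'d \<Rightarrow> int^'d \<Rightarrow> int^'n \<Rightarrow> real^'n \<Rightarrow> real^'n \<Rightarrow> bool" where
  "applicable A b u x z \<longleftrightarrow> (\<exists>\<epsilon>>0. feasible A b u (x + \<epsilon> *\<^sub>R z))"

definition optimal :: "int^'n^'d \<Rightarrow> int^'d \<Rightarrow> int^'n \<Rightarrow> int^'n \<Rightarrow> real^'n \<Rightarrow> bool" where
  "optimal A b c u x \<longleftrightarrow> feasible A b u x \<and>
     (\<forall>y. feasible A b u y \<longrightarrow> rvec c \<bullet> x \<le> rvec c \<bullet> y)"

definition sd_step :: "int^'n^'d \<Rightarrow> int^'d \<Rightarrow> int^'n \<Rightarrow> int^'n \<Rightarrow> real^'n \<Rightarrow> real^'n \<Rightarrow> bool" where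
  "sd_step A b c u x x' \<longleftrightarrow> (\<exists>g \<in> circuits A.
     applicable A b u x (rvec g) \<and>
     (\<forall>h \<in> circuits A. applicable A b u x (rvec h) \<longrightarrow> ratio c (rvec h) \<le> ratio c (rvec g)) \<and>
     ratio c (rvec g) > 0 \<and>
     (\<exists>\<alpha>. feasible A b u (x + \<alpha> *\<^sub>R rvec g) \<and>
          (\<forall>a. feasible A b u (x + a *\<^sub>R rvec g) \<longrightarrow> a \<le> \<alpha>) \<and>
          x' = x + \<alpha> *\<^sub>R rvec g))"

end

theory Submission
  imports Defs
begin


lemma qlin_exists:
  "\<exists>\<phi>::real \<Rightarrow> rat. (\<forall>x y. \<phi> (x + y) = \<phi> x + \<phi> y) \<and> (\<forall>q x. \<phi> (of_rat q * x) = q * \<phi> x) \<and> \<phi> 1 = 1"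
proof -
  let ?s1 = "\<lambda>(q::rat) (x::real). of_rat q * x"
  let ?s2 = "(*) :: rat \<Rightarrow> rat \<Rightarrow> rat"
  interpret v1: vector_space ?s1
    by unfold_locales (auto simp: algebra_simps of_rat_add of_rat_mult)
  interpret v2: vector_space ?s2
    by unfold_locales (auto simp: algebra_simps)
  interpret vp: vector_space_pair ?s1 ?s2 by unfold_locales
  have ind: "v1.independent {1::real}"
    using v1.independent_insert[of 1 "{}"] by auto
  define \<phi> where "\<phi> = vp.construct {1::real} (\<lambda>_. 1)"
  have lin: "Vector_Spaces.linear ?s1 ?s2 \<phi>" unfolding \<phi>_def by (rule vp.linear_construct[OF ind])
  have "\<phi> 1 = 1" unfolding \<phi>_def by (rule vp.construct_basis[OF ind]) simp
  moreover have "\<forall>x y. \<phi> (x + y) = \<phi> x + \<phi> y" "\<forall>q x. \<phi> (of_rat q * x) = q * \<phi> x"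
    using lin unfolding Vector_Spaces.linear_iff by auto
  ultimately show ?thesis by blast
qed


lemma mv_comp: "(rmat A *v z) $ r = (\<Sum>j\<in>UNIV. real_of_int (A$r$j) * z$j)"
  by (simp add: rmat_def matrix_vector_mult_def)

lemma rvec_comp[simp]: "rvec g $ i = real_of_int (g $ i)"
  by (simp add: rvec_def)

lemma rvec_inj: "rvec g = rvec h \<Longrightarrow> g = h"
  by (simp add: vec_eq_iff)

lemma rvec_neg: "rvec (-g) = - rvec g"
  by (simp add: vec_eq_iff)

lemma rvec_eq0: "rvec g = 0 \<longleftrightarrow> g = 0"
  by (simp add: vec_eq_iff)

lemma supp_scale: "t \<noteq> 0 \<Longrightarrow> supp (t *\<^sub>R z) = supp z"
  by (simp add: supp_def)

lemma one_dim:
  assumes m: "min_supp_kernel A z" and w: "rmat A *v w = 0" and s: "supp w \<subseteq> supp z"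
  shows "\<exists>t. w = t *\<^sub>R z"
proof -
  from m have z0: "z \<noteq> 0" and kz: "rmat A *v z = 0" and mn:
    "\<And>w. w \<noteq> 0 \<Longrightarrow> rmat A *v w = 0 \<Longrightarrow> supp w \<subseteq> supp z \<Longrightarrow> supp w = supp z"
    unfolding min_supp_kernel_def by auto
  from z0 obtain i where zi: "z $ i \<noteq> 0" by (auto simp: vec_eq_iff)
  define w' where "w' = w - (w$i / z$i) *\<^sub>R z"
  have kw': "rmat A *v w' = 0" using w kz by (simp add: w'_def algebra_simps)
  have w'i: "w' $ i = 0" using zi by (simp add: w'_def)
  have sw': "supp w' \<subseteq> supp z" using s by (auto simp: supp_def w'_def)
  have "w' = 0"
  proof (rule ccontr)
    assume "w' \<noteq> 0"
    then have "supp w' = supp z" using mn kw' sw' by blast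
    then show False using zi w'i by (auto simp: supp_def)
  qed
  then show ?thesis unfolding w'_def by (intro exI[of _ "w$i / z$i"]) simp
qed

lemma phi_sum:
  assumes add: "\<forall>x y. \<phi> (x + y) = \<phi> x + (\<phi> y :: rat)"
  shows "\<phi> (\<Sum>j\<in>S. f j) = (\<Sum>j\<in>S. \<phi> (f j))"
proof -
  have p0: "\<phi> 0 = 0" using add[rule_format, of 0 0] by simp
  show ?thesis
  proof (induction S rule: infinite_finite_induct)
    case (infinite A) then show ?case using p0 by simp
  next
    case empty then show ?case using p0 by simp
  next
    case (insert x F) then show ?case using add by simp
  qed
qed

lemma rat_kernel:
  fixes z :: "real^'n"
  assumes m: "min_supp_kernel A z"
  shows "\<exists>g::int^'n. g \<noteq> 0 \<and> (\<exists>t. rvec g = t *\<^sub>R z)"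
proof -
  from m have z0: "z \<noteq> 0" and kz: "rmat A *v z = 0"
    unfolding min_supp_kernel_def by auto
  from z0 obtain i where zi: "z $ i \<noteq> 0" by (auto simp: vec_eq_iff)
  obtain \<phi> :: "real \<Rightarrow> rat" where add: "\<forall>x y. \<phi> (x + y) = \<phi> x + \<phi> y"
    and sc: "\<forall>q x. \<phi> (of_rat q * x) = q * \<phi> x" and p1: "\<phi> 1 = 1"
    using qlin_exists by blast
  have p0: "\<phi> 0 = 0" using add[rule_format, of 0 0] by simp
  have pint: "\<phi> (of_int k * x) = of_int k * \<phi> x" for k x
    using sc[rule_format, of "of_int k" x] by simp
  define z' where "z' = (1 / z$i) *\<^sub>R z"
  define q where "q j = \<phi> (z' $ j)" for j
  have qi: "q i = 1" using zi p1 by (simp add: q_def z'_def)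
  have kz': "rmat A *v z' = 0" using kz by (simp add: z'_def algebra_simps)
  have Aq: "(\<Sum>j\<in>UNIV. of_int (A$r$j) * q j) = 0" for r
  proof -
    have "(\<Sum>j\<in>UNIV. of_int (A$r$j) * q j) = \<phi> (\<Sum>j\<in>UNIV. real_of_int (A$r$j) * z'$j)"
      by (simp add: phi_sum[OF add] pint q_def)
    also have "\<dots> = \<phi> ((rmat A *v z') $ r)" by (simp add: mv_comp)
    also have "\<dots> = 0" using kz' p0 by simp
    finally show ?thesis .
  qed
  define v where "v = (\<chi> j. real_of_rat (q j))"
  have kv: "rmat A *v v = 0"
  proof -
    have "(rmat A *v v) $ r = 0" for r
    proof -
      have "(rmat A *v v) $ r = of_rat (\<Sum>j\<in>UNIV. of_int (A$r$j) * q j)"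
        by (simp add: mv_comp v_def of_rat_sum of_rat_mult)
      then show ?thesis using Aq by simp
    qed
    then show ?thesis by (simp add: vec_eq_iff)
  qed
  have "v $ i = 1" using qi by (simp add: v_def)
  then have v0: "v \<noteq> 0" by (metis zero_index one_neq_zero)
  have sv: "supp v \<subseteq> supp z" using p0 by (auto simp: supp_def v_def q_def z'_def)
  obtain t where vt: "v = t *\<^sub>R z" using one_dim[OF m kv sv] by blast
  define d where "d j = snd (quotient_of (q j))" for j
  define n where "n j = fst (quotient_of (q j))" for j
  have dpos: "d j > 0" for j unfolding d_def using quotient_of_denom_pos' by auto
  have qnd: "q j = of_int (n j) / of_int (d j)" for j
    unfolding n_def d_def using quotient_of_div by (metis prod.collapse)
  define D where "D = (\<Prod>j\<in>UNIV. d j)"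
  have Dpos: "D > 0" unfolding D_def using dpos by (simp add: prod_pos)
  have dD: "d j dvd D" for j unfolding D_def by (simp add: dvd_prodI)
  define g where "g = (\<chi> j. n j * (D div d j))"
  have gq: "real_of_int (g $ j) = real_of_rat (q j) * real_of_int D" for j
  proof -
    have "D = d j * (D div d j)" using dD[of j] by simp
    then have "real_of_int D = real_of_int (d j) * real_of_int (D div d j)"
      by (metis of_int_mult)
    moreover have "real_of_rat (q j) = real_of_int (n j) / real_of_int (d j)"
      by (simp add: qnd of_rat_divide)
    ultimately show ?thesis using dpos[of j] by (simp add: g_def field_simps)
  qed
  have rg: "rvec g = (real_of_int D * t) *\<^sub>R z"
  proof -
    have "rvec g = real_of_int D *\<^sub>R v" by (simp add: vec_eq_iff gq v_def)
    then show ?thesis using vt by simp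
  qed
  have "g \<noteq> 0"
  proof
    assume "g = 0"
    then have "real_of_int (g $ i) = 0" by simp
    then show False using gq[of i] qi Dpos by simp
  qed
  then show ?thesis using rg by blast
qed

lemma norm_le_rvec: "norm (rvec g) \<le> norm (rvec h) \<longleftrightarrow> (\<Sum>j\<in>UNIV. (g$j)^2) \<le> (\<Sum>j\<in>UNIV. (h$j)^2)"
proof -
  have e: "rvec g \<bullet> rvec g = real_of_int (\<Sum>j\<in>UNIV. (g$j)^2)" for g :: "int^'n"
  proof -
    have "rvec g \<bullet> rvec g = (\<Sum>j\<in>UNIV. real_of_int (g$j) * real_of_int (g$j))"
      by (simp add: inner_vec_def)
    also have "\<dots> = real_of_int (\<Sum>j\<in>UNIV. (g$j)^2)" by (simp add: power2_eq_square)
    finally show ?thesis .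
  qed
  show ?thesis unfolding norm_le e of_int_le_iff ..
qed

lemma circuit_exists:
  fixes z :: "real^'n"
  assumes m: "min_supp_kernel A z"
  shows "\<exists>g \<in> circuits A. \<exists>t>0. rvec g = t *\<^sub>R z"
proof -
  let ?H = "{h::int^'n. h \<noteq> 0 \<and> (\<exists>t. rvec h = t *\<^sub>R z)}"
  let ?f = "\<lambda>h::int^'n. nat (\<Sum>j\<in>UNIV. (h$j)^2)"
  obtain h0 where h0: "h0 \<in> ?H" using rat_kernel[OF m] by blast
  define k where "k = (LEAST k. \<exists>h\<in>?H. ?f h = k)"
  have "\<exists>h\<in>?H. ?f h = k" unfolding k_def by (rule LeastI[of _ "?f h0"]) (use h0 in blast)
  then obtain g where gH: "g \<in> ?H" and gk: "?f g = k" by blast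
  have gmin: "norm (rvec g) \<le> norm (rvec h)" if "h \<in> ?H" for h
  proof -
    have "k \<le> ?f h" unfolding k_def by (rule Least_le) (use that in blast)
    moreover have "0 \<le> (\<Sum>j\<in>UNIV. (h$j)^2)" by (simp add: sum_nonneg)
    ultimately have "(\<Sum>j\<in>UNIV. (g$j)^2) \<le> (\<Sum>j\<in>UNIV. (h$j)^2)"
      using gk by (simp add: nat_le_eq_zle)
    then show ?thesis by (simp add: norm_le_rvec)
  qed
  from gH obtain t where g0: "g \<noteq> 0" and gt: "rvec g = t *\<^sub>R z" by blast
  have gc: "g \<in> circuits A"
    unfolding circuits_def using m g0 gt gmin by blast
  have ngc: "-g \<in> circuits A"
  proof -
    have "rvec (-g) = (-t) *\<^sub>R z" using gt by (simp add: rvec_neg)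
    moreover have "norm (rvec (-g)) \<le> norm (rvec h)" if "h \<in> ?H" for h
      using gmin[OF that] by (simp add: rvec_neg)
    ultimately have "min_supp_kernel A z \<and> -g \<noteq> 0 \<and> (\<exists>t. rvec (-g) = t *\<^sub>R z) \<and>
       (\<forall>h::int^'n. h \<noteq> 0 \<and> (\<exists>t::real. rvec h = t *\<^sub>R z) \<longrightarrow> norm (rvec (-g)) \<le> norm (rvec h))"
      using m g0 by (simp del: scaleR_minus_left)
    then show ?thesis unfolding circuits_def by (intro CollectI exI[of _ z])
  qed
  have t0: "t \<noteq> 0" using gt g0 by (auto simp: rvec_eq0[symmetric])
  show ?thesis
  proof (cases "t > 0")
    case True then show ?thesis using gc gt by blast
  next
    case False
    then have "-t > 0" using t0 by simp
    moreover have "rvec (-g) = (-t) *\<^sub>R z" using gt by (simp add: rvec_neg)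
    ultimately show ?thesis using ngc by blast
  qed
qed

lemma min_supp_scale:
  assumes "min_supp_kernel A z" "t \<noteq> 0"
  shows "min_supp_kernel A (t *\<^sub>R z)"
  using assms unfolding min_supp_kernel_def by (auto simp: supp_scale algebra_simps)

lemma circuit_min_supp:
  assumes "g \<in> circuits A"
  shows "min_supp_kernel A (rvec g)" "g \<noteq> 0"
proof -
  from assms obtain z t where m: "min_supp_kernel A z" and g0: "g \<noteq> 0" and gt: "rvec g = t *\<^sub>R z"
    unfolding circuits_def by blast
  have "t \<noteq> 0" using gt g0 by (auto simp: rvec_eq0[symmetric])
  then show "min_supp_kernel A (rvec g)" using min_supp_scale[OF m] gt by simp
  show "g \<noteq> 0" by fact
qed

lemma circuit_pm:
  fixes g :: "int^'n"
  assumes g: "g \<in> circuits A" and h: "h \<in> circuits A" and s: "supp (rvec g) = supp (rvec h)"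
  shows "h = g \<or> h = -g"
proof -
  have mg: "min_supp_kernel A (rvec g)" using circuit_min_supp[OF g] by simp
  have kh: "rmat A *v rvec h = 0" using circuit_min_supp[OF h] unfolding min_supp_kernel_def by simp
  obtain s where hs: "rvec h = s *\<^sub>R rvec g" using one_dim[OF mg kh] s by auto
  have h0: "h \<noteq> 0" and g0: "g \<noteq> 0" using circuit_min_supp g h by auto
  have s0: "s \<noteq> 0" using hs h0 by (auto simp: rvec_eq0[symmetric])
  have ng: "norm (rvec g) > 0" using g0 by (simp add: rvec_eq0)
  from g obtain zg tg where gz: "rvec g = tg *\<^sub>R zg" and
    gmin: "\<forall>h'::int^'n. h' \<noteq> 0 \<and> (\<exists>t::real. rvec h' = t *\<^sub>R zg) \<longrightarrow> norm (rvec g) \<le> norm (rvec h')"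
    unfolding circuits_def by blast
  from h obtain zh th where hz: "rvec h = th *\<^sub>R zh" and
    hmin: "\<forall>h'::int^'n. h' \<noteq> 0 \<and> (\<exists>t::real. rvec h' = t *\<^sub>R zh) \<longrightarrow> norm (rvec h) \<le> norm (rvec h')"
    unfolding circuits_def by blast
  have "rvec h = (s * tg) *\<^sub>R zg" using hs gz by simp
  then have "norm (rvec g) \<le> norm (rvec h)" using gmin h0 by blast
  then have a: "1 \<le> \<bar>s\<bar>" using hs ng by simp
  have "rvec g = (1 / s) *\<^sub>R rvec h" using hs s0 by simp
  then have "rvec g = (th / s) *\<^sub>R zh" using hz by simp
  then have "norm (rvec h) \<le> norm (rvec g)" using hmin g0 by blast
  then have b: "\<bar>s\<bar> \<le> 1" using hs ng by (simp add: mult_le_cancel_right1)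
  from a b have "s = 1 \<or> s = -1" by linarith
  then show ?thesis using hs by (auto simp: rvec_neg[symmetric] dest: rvec_inj)
qed

lemma circuits_finite: "finite (circuits A)"
proof -
  have "circuits A = (\<Union>S\<in>UNIV. {h\<in>circuits A. supp (rvec h) = S})" by auto
  moreover have "finite {h\<in>circuits A. supp (rvec h) = S}" for S
  proof (cases "{h\<in>circuits A. supp (rvec h) = S} = {}")
    case False
    then obtain g where g: "g \<in> circuits A" "supp (rvec g) = S" by blast
    then have "{h\<in>circuits A. supp (rvec h) = S} \<subseteq> {g, -g}" using circuit_pm[OF g(1)] by auto
    then show ?thesis by (rule finite_subset) simp
  next
    case True then show ?thesis by (metis finite.emptyI)
  qed
  moreover have "finite (\<Union>S\<in>UNIV. {h\<in>circuits A. supp (rvec h) = S})"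
    by (rule finite_UN_I) (simp_all add: calculation(2))
  ultimately show ?thesis by simp
qed



definition conf :: "real^'n \<Rightarrow> real^'n \<Rightarrow> bool" where
  "conf y z \<longleftrightarrow> (\<forall>i. (0 < y$i \<longrightarrow> 0 < z$i) \<and> (y$i < 0 \<longrightarrow> z$i < 0))"

lemma norm1_nonneg: "0 \<le> norm1 z"
  by (simp add: norm1_def sum_nonneg)

lemma norm1_pos: "z \<noteq> 0 \<Longrightarrow> 0 < norm1 z"
proof -
  assume "z \<noteq> 0"
  then obtain i where "z$i \<noteq> 0" by (auto simp: vec_eq_iff)
  then have "0 < \<bar>z$i\<bar>" by simp
  also have "\<bar>z$i\<bar> \<le> norm1 z" unfolding norm1_def
    by (rule member_le_sum) auto
  finally show ?thesis .
qed

lemma norm1_scale: "norm1 (t *\<^sub>R z) = \<bar>t\<bar> * norm1 z"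
  by (simp add: norm1_def sum_distrib_left abs_mult)

lemma norm1_tri: "norm1 (x + y) \<le> norm1 x + norm1 y"
  unfolding norm1_def sum.distrib[symmetric] by (rule sum_mono) (simp add: abs_triangle_ineq)

lemma ratio_scale: "t > 0 \<Longrightarrow> ratio c (t *\<^sub>R z) = ratio c z"
  by (simp add: ratio_def norm1_scale)

lemma ratio_eq: "z \<noteq> 0 \<Longrightarrow> - (rvec c \<bullet> z) = ratio c z * norm1 z"
  using norm1_pos[of z] by (simp add: ratio_def)

lemma feas_comp: "feasible A b u x \<Longrightarrow> 0 \<le> x$i \<and> x$i \<le> real_of_int (u$i)"
  by (simp add: feasible_def)

lemma appl_char:
  assumes f: "feasible A b u x" and k: "rmat A *v z = 0"
  shows "applicable A b u x z \<longleftrightarrow> (\<forall>i. (0 < z$i \<longrightarrow> x$i < real_of_int (u$i)) \<and> (z$i < 0 \<longrightarrow> 0 < x$i))"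
proof
  assume "applicable A b u x z"
  then obtain e where e: "e > 0" "feasible A b u (x + e *\<^sub>R z)" unfolding applicable_def by blast
  show "\<forall>i. (0 < z$i \<longrightarrow> x$i < real_of_int (u$i)) \<and> (z$i < 0 \<longrightarrow> 0 < x$i)"
  proof (intro allI conjI impI)
    fix i
    have "0 \<le> x$i + e * z$i" "x$i + e * z$i \<le> real_of_int (u$i)"
      using feas_comp[OF e(2), of i] by auto
    moreover assume "0 < z$i" 
    ultimately show "x$i < real_of_int (u$i)" using e(1) by (smt (verit) mult_pos_pos)
  next
    fix i
    have "0 \<le> x$i + e * z$i" "x$i + e * z$i \<le> real_of_int (u$i)"
      using feas_comp[OF e(2), of i] by auto
    moreover assume "z$i < 0" 
    ultimately show "0 < x$i" using e(1) by (smt (verit) mult_pos_neg)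
  qed
next
  assume c: "\<forall>i. (0 < z$i \<longrightarrow> x$i < real_of_int (u$i)) \<and> (z$i < 0 \<longrightarrow> 0 < x$i)"
  have "\<exists>bb>0. \<forall>e>0. e < bb \<longrightarrow> 0 \<le> x$i + e * z$i \<and> x$i + e * z$i \<le> real_of_int (u$i)" for i
  proof -
    have fx: "0 \<le> x$i" "x$i \<le> real_of_int (u$i)" using feas_comp[OF f] by auto
    consider "z$i = 0" | "z$i > 0" | "z$i < 0" by linarith
    then show ?thesis
    proof cases
      case 1 then show ?thesis using fx by (intro exI[of _ 1]) simp
    next
      case 2
      then have xu: "x$i < real_of_int (u$i)" using c by blast
      show ?thesis
      proof (intro exI[of _ "(real_of_int (u$i) - x$i) / z$i"] conjI allI impI)
        show "0 < (real_of_int (u$i) - x$i) / z$i" using 2 xu by simp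
        fix e assume "0 < e" "e < (real_of_int (u$i) - x$i) / z$i"
        then have "e * z$i < real_of_int (u$i) - x$i" using 2 by (simp add: pos_less_divide_eq)
        moreover have "0 \<le> e * z$i" using \<open>0 < e\<close> 2 by simp
        ultimately show "0 \<le> x$i + e * z$i" "x$i + e * z$i \<le> real_of_int (u$i)" using fx by linarith+
      qed
    next
      case 3
      then have xu: "0 < x$i" using c by blast
      show ?thesis
      proof (intro exI[of _ "x$i / (- z$i)"] conjI allI impI)
        show "0 < x$i / (- z$i)" using 3 xu by (intro divide_pos_pos) auto
        fix e assume "0 < e" "e < x$i / (- z$i)"
        then have "e * (- z$i) < x$i" using 3 by (metis neg_0_less_iff_less pos_less_divide_eq)
        moreover have "e * z$i \<le> 0" using \<open>0 < e\<close> 3 by (simp add: mult_nonneg_nonpos)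
        ultimately show "0 \<le> x$i + e * z$i" "x$i + e * z$i \<le> real_of_int (u$i)" using fx by linarith+
      qed
    qed
  qed
  then have "\<forall>i. eventually (\<lambda>e. 0 \<le> x$i + e * z$i \<and> x$i + e * z$i \<le> real_of_int (u$i)) (at_right (0::real))"
    by (simp add: eventually_at_right_field)
  then have "eventually (\<lambda>e. \<forall>i. 0 \<le> x$i + e * z$i \<and> x$i + e * z$i \<le> real_of_int (u$i)) (at_right (0::real))"
    by (intro eventually_all_finite) auto
  then obtain bb where bb: "bb > 0" "\<And>e. 0 < e \<Longrightarrow> e < bb \<Longrightarrow> \<forall>i. 0 \<le> x$i + e * z$i \<and> x$i + e * z$i \<le> real_of_int (u$i)"
    unfolding eventually_at_right_field by blast
  define e where "e = bb / 2"
  have e: "0 < e" "e < bb" using bb by (auto simp: e_def)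
  have "feasible A b u (x + e *\<^sub>R z)"
    unfolding feasible_def using bb(2)[OF e] f k
    by (simp add: feasible_def algebra_simps)
  then show "applicable A b u x z" unfolding applicable_def using e by blast
qed

lemma conf_appl:
  assumes "feasible A b u x" "rmat A *v y = 0" "rmat A *v z = 0" "conf y z" "applicable A b u x z"
  shows "applicable A b u x y"
proof -
  have "\<forall>i. (0 < z$i \<longrightarrow> x$i < real_of_int (u$i)) \<and> (z$i < 0 \<longrightarrow> 0 < x$i)"
    using assms(5) appl_char[OF assms(1,3)] by blast
  then have "\<forall>i. (0 < y$i \<longrightarrow> x$i < real_of_int (u$i)) \<and> (y$i < 0 \<longrightarrow> 0 < x$i)"
    using assms(4) unfolding conf_def by blast
  then show ?thesis using appl_char[OF assms(1,2)] by blast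
qed

lemma conf_supp: "conf y z \<Longrightarrow> supp y \<subseteq> supp z"
  unfolding conf_def supp_def using linorder_neq_iff by fastforce

lemma conf_refl: "conf z z" by (simp add: conf_def)

lemma conf_trans: "conf x y \<Longrightarrow> conf y z \<Longrightarrow> conf x z"
  by (simp add: conf_def)

lemma conf_scale: "t > 0 \<Longrightarrow> conf y z \<Longrightarrow> conf (t *\<^sub>R y) z"
  by (simp add: conf_def zero_less_mult_iff mult_less_0_iff)

lemma sign_aux:
  fixes t w z :: real
  assumes t: "t > 0" and wz: "w \<noteq> 0 \<Longrightarrow> z \<noteq> 0" and le: "w \<noteq> 0 \<Longrightarrow> z / w > 0 \<Longrightarrow> t \<le> z / w"
  shows "(0 < z - t*w \<longrightarrow> 0 < z) \<and> (z - t*w < 0 \<longrightarrow> z < 0)"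
proof (cases "w = 0")
  case True then show ?thesis by simp
next
  case False
  then have z0: "z \<noteq> 0" using wz by blast
  consider "w > 0" "z > 0" | "w > 0" "z < 0" | "w < 0" "z > 0" | "w < 0" "z < 0"
    using False z0 by linarith
  then show ?thesis
  proof cases
    case 1
    then have "z / w > 0" by simp
    then have "t \<le> z / w" using le False by blast
    then have "t * w \<le> z" using 1 by (simp add: pos_le_divide_eq mult.commute)
    then show ?thesis using 1 by simp
  next
    case 2 then show ?thesis using t by (smt (verit) mult_pos_pos)
  next
    case 3 then show ?thesis using t by (smt (verit) mult_pos_neg)
  next
    case 4
    then have "z / w > 0" by (simp add: divide_neg_neg)
    then have "t \<le> z / w" using le False by blast
    then have "z \<le> t * w" using 4 by (simp add: neg_le_divide_eq mult.commute)
    then show ?thesis using 4 by simp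
  qed
qed

lemma sign_aux2:
  fixes t w z :: real
  assumes t: "t > 0" and le: "w \<noteq> 0 \<Longrightarrow> z / w > 0 \<and> t \<le> z / w"
  shows "\<bar>z\<bar> = t * \<bar>w\<bar> + \<bar>z - t*w\<bar> \<and> (0 < z - t*w \<longrightarrow> 0 < z) \<and> (z - t*w < 0 \<longrightarrow> z < 0)"
proof (cases "w = 0")
  case True then show ?thesis by simp
next
  case False
  then have q: "z / w > 0" "t \<le> z / w" using le by auto
  consider "w > 0" | "w < 0" using False by linarith
  then show ?thesis
  proof cases
    case 1
    then have "z > 0" using q by (simp add: zero_less_divide_iff)
    moreover have "t * w \<le> z" using q 1 by (simp add: pos_le_divide_eq mult.commute)
    ultimately show ?thesis using 1 t by (simp add: abs_mult)
  next
    case 2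
    then have "z < 0" using q by (simp add: zero_less_divide_iff)
    moreover have "z \<le> t * w" using q 2 by (simp add: neg_le_divide_eq mult.commute)
    ultimately show ?thesis using 2 t by (simp add: abs_mult)
  qed
qed

lemma conf_exists:
  fixes z :: "real^'n"
  assumes "z \<noteq> 0" "rmat A *v z = 0"
  shows "\<exists>y. min_supp_kernel A y \<and> conf y z"
  using assms
proof (induction "card (supp z)" arbitrary: z rule: less_induct)
  case less
  show ?case
  proof (cases "min_supp_kernel A z")
    case True then show ?thesis using conf_refl by blast
  next
    case False
    then obtain w where w: "w \<noteq> 0" "rmat A *v w = 0" "supp w \<subseteq> supp z" "supp w \<noteq> supp z"
      using less.prems unfolding min_supp_kernel_def by blast
    obtain w' where w': "w' \<noteq> 0" "rmat A *v w' = 0" "supp w' = supp w" and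
      ex: "\<exists>i. w'$i \<noteq> 0 \<and> z$i / w'$i > 0"
    proof -
      from w(1) obtain i where wi: "w$i \<noteq> 0" by (auto simp: vec_eq_iff)
      then have "z$i \<noteq> 0" using w(3) by (auto simp: supp_def)
      then have "z$i / w$i \<noteq> 0" using wi by simp
      moreover have "z$i / (-w)$i = - (z$i / w$i)" by simp
      ultimately consider "z$i / w$i > 0" | "z$i / (-w)$i > 0" by linarith
      then show ?thesis
      proof cases
        case 1 then show ?thesis using that[of w] w wi by blast
      next
        case 2
        have "supp (-w) = supp w" by (simp add: supp_def)
        moreover have "rmat A *v (-w) = 0"
        proof -
          have "rmat A *v (-w) = rmat A *v ((-1) *\<^sub>R w)" by simp
          also have "\<dots> = (-1) *\<^sub>R (rmat A *v w)" by (rule matrix_vector_mult_scaleR)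
          finally show ?thesis using w(2) by simp
        qed
        ultimately show ?thesis using w(1) wi 2
          by (intro that[of "-w"] exI[of _ i] conjI) simp_all
      qed
    qed
    define J where "J = {j. w'$j \<noteq> 0 \<and> z$j / w'$j > 0}"
    define t where "t = Min ((\<lambda>j. z$j / w'$j) ` J)"
    have Jne: "J \<noteq> {}" using ex by (auto simp: J_def)
    have tin: "t \<in> (\<lambda>j. z$j / w'$j) ` J" unfolding t_def by (rule Min_in) (use Jne in auto)
    then obtain i0 where i0: "i0 \<in> J" "t = z$i0 / w'$i0" by blast
    have tpos: "t > 0" using i0 by (simp add: J_def)
    have tle: "t \<le> z$j / w'$j" if "j \<in> J" for j unfolding t_def using that by (intro Min_le) auto
    define z' where "z' = z - t *\<^sub>R w'"
    have kz': "rmat A *v z' = 0" using less.prems w' by (simp add: z'_def algebra_simps)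
    have wz: "w'$j \<noteq> 0 \<Longrightarrow> z$j \<noteq> 0" for j using w' w(3) by (auto simp: supp_def)
    have cf: "conf z' z" unfolding conf_def z'_def
    proof
      fix j
      show "(0 < (z - t *\<^sub>R w')$j \<longrightarrow> 0 < z$j) \<and> ((z - t *\<^sub>R w')$j < 0 \<longrightarrow> z$j < 0)"
        using sign_aux[OF tpos wz[of j], of ] tle[of j] by (simp add: J_def)
    qed
    have z'i0: "z'$i0 = 0" using i0 by (simp add: z'_def J_def)
    have sz': "supp z' \<subseteq> supp z" using cf by (rule conf_supp)
    have "i0 \<in> supp z" using i0 wz by (auto simp: supp_def J_def)
    then have "supp z' \<subset> supp z" using sz' z'i0 by (auto simp: supp_def)
    then have lt: "card (supp z') < card (supp z)" by (rule psubset_card_mono[rotated]) simp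
    have "z' \<noteq> 0"
    proof
      assume "z' = 0"
      then have "z = t *\<^sub>R w'" by (simp add: z'_def)
      then have "supp z = supp w'" using tpos by (simp add: supp_scale)
      then show False using w w' by simp
    qed
    then obtain y where "min_supp_kernel A y" "conf y z'" using less.hyps[OF lt _ kz'] by blast
    then show ?thesis using conf_trans[OF _ cf] by blast
  qed
qed



lemma avg_le:
  fixes p q a b :: real
  assumes "a > 0" "b > 0"
  shows "(p + q) / (a + b) \<le> max (p / a) (q / b)"
proof -
  let ?M = "max (p / a) (q / b)"
  have "a * (p / a) \<le> a * ?M" using assms by (intro mult_left_mono) auto
  then have "p \<le> a * ?M" using assms by simp
  moreover have "b * (q / b) \<le> b * ?M" using assms by (intro mult_left_mono) auto
  then have "q \<le> b * ?M" using assms by simp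
  ultimately have "p + q \<le> (a + b) * ?M" by (simp add: algebra_simps)
  then show ?thesis using assms by (simp add: pos_divide_le_eq mult.commute)
qed

lemma kernel_neg: "rmat A *v z = 0 \<Longrightarrow> rmat A *v (-z) = 0"
proof -
  assume k: "rmat A *v z = 0"
  have "rmat A *v (-z) = rmat A *v ((-1) *\<^sub>R z)" by simp
  also have "\<dots> = (-1) *\<^sub>R (rmat A *v z)" by (rule matrix_vector_mult_scaleR)
  finally show ?thesis using k by simp
qed

lemma part1:
  fixes z :: "real^'n"
  assumes "feasible A b u x" "rmat A *v z = 0" "z \<noteq> 0" "applicable A b u x z"
  shows "\<exists>g\<in>circuits A. applicable A b u x (rvec g) \<and> ratio c (rvec g) \<ge> ratio c z"
  using assms(2-)
proof (induction "card (supp z)" arbitrary: z rule: less_induct)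
  case less
  note f = assms(1)
  obtain y where y: "min_supp_kernel A y" "conf y z" using conf_exists[OF less.prems(2,1)] by blast
  obtain g s where g: "g \<in> circuits A" "s > 0" "rvec g = s *\<^sub>R y"
    using circuit_exists[OF y(1)] by blast
  define G where "G = rvec g"
  have kG: "rmat A *v G = 0" using circuit_min_supp[OF g(1)] by (simp add: G_def min_supp_kernel_def)
  have G0: "G \<noteq> 0" using circuit_min_supp[OF g(1)] by (simp add: G_def rvec_eq0)
  have cG: "conf G z" using conf_scale[OF g(2) y(2)] g(3) by (simp add: G_def)
  have aG: "applicable A b u x G" by (rule conf_appl[OF f kG less.prems(1) cG less.prems(3)])
  define J where "J = {j. G$j \<noteq> 0}"
  define t where "t = Min ((\<lambda>j. z$j / G$j) ` J)"
  have Jne: "J \<noteq> {}" using G0 by (auto simp: J_def vec_eq_iff)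
  have pos: "z$j / G$j > 0" if nz: "G$j \<noteq> 0" for j
  proof -
    consider "G$j > 0" | "G$j < 0" using nz by linarith
    then show ?thesis
    proof cases
      case 1 then have "z$j > 0" using cG by (simp add: conf_def)
      then show ?thesis using 1 by simp
    next
      case 2 then have "z$j < 0" using cG by (simp add: conf_def)
      then show ?thesis using 2 by (simp add: divide_neg_neg)
    qed
  qed
  have tin: "t \<in> (\<lambda>j. z$j / G$j) ` J" unfolding t_def by (rule Min_in) (use Jne in auto)
  then obtain i0 where i0: "i0 \<in> J" "t = z$i0 / G$i0" by blast
  have tpos: "t > 0" using i0 pos by (simp add: J_def)
  have tle: "t \<le> z$j / G$j" if "G$j \<noteq> 0" for j unfolding t_def using that
    by (intro Min_le) (auto simp: J_def)
  define z' where "z' = z - t *\<^sub>R G"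
  have co: "\<bar>z$j\<bar> = t * \<bar>G$j\<bar> + \<bar>z'$j\<bar> \<and> (0 < z'$j \<longrightarrow> 0 < z$j) \<and> (z'$j < 0 \<longrightarrow> z$j < 0)" for j
    using sign_aux2[OF tpos, of "G$j" "z$j"] pos[of j] tle[of j] by (simp add: z'_def)
  have cf: "conf z' z" unfolding conf_def using co by blast
  have kz': "rmat A *v z' = 0" using less.prems kG by (simp add: z'_def algebra_simps)
  have n1: "norm1 z = t * norm1 G + norm1 z'"
    unfolding norm1_def using co by (simp add: sum_distrib_left sum.distrib[symmetric])
  have ip: "- (rvec c \<bullet> z) = t * (- (rvec c \<bullet> G)) + (- (rvec c \<bullet> z'))"
    by (simp add: z'_def inner_diff_right algebra_simps)
  show ?case
  proof (cases "z' = 0")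
    case True
    then have "z = t *\<^sub>R G" by (simp add: z'_def)
    then have "ratio c z = ratio c G" using ratio_scale[OF tpos] by simp
    then show ?thesis using g(1) aG by (auto simp: G_def)
  next
    case False
    have z'i0: "z'$i0 = 0" using i0 by (simp add: z'_def J_def)
    have "i0 \<in> supp z" using i0 pos[of i0] by (auto simp: supp_def J_def)
    then have "supp z' \<subset> supp z" using conf_supp[OF cf] z'i0 by (auto simp: supp_def)
    then have lt: "card (supp z') < card (supp z)" by (rule psubset_card_mono[rotated]) simp
    have az': "applicable A b u x z'" by (rule conf_appl[OF f kz' less.prems(1) cf less.prems(3)])
    obtain h where h: "h \<in> circuits A" "applicable A b u x (rvec h)" "ratio c (rvec h) \<ge> ratio c z'"
      using less.hyps[OF lt kz' False az'] by blast
    have nG: "norm1 G > 0" using norm1_pos[OF G0] .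
    have nz': "norm1 z' > 0" using norm1_pos[OF False] .
    have "ratio c z = (t * (- (rvec c \<bullet> G)) + (- (rvec c \<bullet> z'))) / (t * norm1 G + norm1 z')"
      unfolding ratio_def using ip n1 by simp
    also have "\<dots> \<le> max ((t * (- (rvec c \<bullet> G))) / (t * norm1 G)) ((- (rvec c \<bullet> z')) / norm1 z')"
      by (rule avg_le) (use nG nz' tpos in simp_all)
    also have "\<dots> = max (ratio c G) (ratio c z')" using tpos by (simp add: ratio_def)
    finally have "ratio c z \<le> max (ratio c G) (ratio c z')" .
    then show ?thesis using h g(1) aG unfolding G_def by (metis max.absorb_iff2 max_def order_trans)
  qed
qed



lemma feas_diff_kernel:
  "feasible A b u x \<Longrightarrow> feasible A b u y \<Longrightarrow> rmat A *v (y - x) = 0"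
  by (simp add: feasible_def matrix_vector_mult_diff_distrib)

lemma steep:
  assumes f: "feasible A b u x" and g: "g \<in> circuits A"
    and maxr: "\<forall>h\<in>circuits A. applicable A b u x (rvec h) \<longrightarrow> ratio c (rvec h) \<le> ratio c (rvec g)"
    and k: "rmat A *v z = 0" and a: "applicable A b u x z"
  shows "- (rvec c \<bullet> z) \<le> ratio c (rvec g) * norm1 z"
proof (cases "z = 0")
  case True then show ?thesis by (simp add: norm1_def)
next
  case False
  obtain h where h: "h \<in> circuits A" "applicable A b u x (rvec h)" "ratio c (rvec h) \<ge> ratio c z"
    using part1[OF f k False a] by blast
  have "ratio c z \<le> ratio c (rvec g)" using h maxr by force
  then have "ratio c z * norm1 z \<le> ratio c (rvec g) * norm1 z"
    using norm1_nonneg by (intro mult_right_mono) auto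
  then show ?thesis using ratio_eq[OF False] by simp
qed

lemma step_info:
  assumes st: "sd_step A b c u x x'" and f: "feasible A b u x"
  shows "\<exists>g \<alpha>. g \<in> circuits A \<and> applicable A b u x (rvec g) \<and>
     (\<forall>h\<in>circuits A. applicable A b u x (rvec h) \<longrightarrow> ratio c (rvec h) \<le> ratio c (rvec g)) \<and>
     ratio c (rvec g) > 0 \<and> feasible A b u x' \<and> x' = x + \<alpha> *\<^sub>R rvec g \<and> \<alpha> > 0 \<and>
     (\<exists>j. (rvec g $ j > 0 \<and> x' $ j \<ge> real_of_int (u$j)) \<or> (rvec g $ j < 0 \<and> x' $ j \<le> 0))"
proof -
  from st obtain g \<alpha> where g: "g \<in> circuits A" "applicable A b u x (rvec g)"
    "\<forall>h\<in>circuits A. applicable A b u x (rvec h) \<longrightarrow> ratio c (rvec h) \<le> ratio c (rvec g)"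
    "ratio c (rvec g) > 0" and fa: "feasible A b u (x + \<alpha> *\<^sub>R rvec g)"
    and amax: "\<forall>a. feasible A b u (x + a *\<^sub>R rvec g) \<longrightarrow> a \<le> \<alpha>" and x': "x' = x + \<alpha> *\<^sub>R rvec g"
    unfolding sd_step_def by blast
  from g(2) obtain e where e: "e > 0" "feasible A b u (x + e *\<^sub>R rvec g)" unfolding applicable_def by blast
  have apos: "\<alpha> > 0" using amax e by force
  have kG: "rmat A *v rvec g = 0" using circuit_min_supp[OF g(1)] by (simp add: min_supp_kernel_def)
  have bnd: "\<exists>j. (rvec g $ j > 0 \<and> x' $ j \<ge> real_of_int (u$j)) \<or> (rvec g $ j < 0 \<and> x' $ j \<le> 0)"
  proof (rule ccontr)
    assume "\<not> ?thesis"
    then have "\<forall>j. (0 < rvec g $ j \<longrightarrow> x' $ j < real_of_int (u$j)) \<and> (rvec g $ j < 0 \<longrightarrow> 0 < x' $ j)"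
      by force
    then have "applicable A b u x' (rvec g)" using appl_char[OF fa[folded x'] kG] by blast
    then obtain e' where e': "e' > 0" "feasible A b u (x' + e' *\<^sub>R rvec g)" unfolding applicable_def by blast
    have "x' + e' *\<^sub>R rvec g = x + (\<alpha> + e') *\<^sub>R rvec g" using x' by (simp add: algebra_simps)
    then have "\<alpha> + e' \<le> \<alpha>" using amax e' by metis
    then show False using e' by simp
  qed
  show ?thesis using g fa x' apos bnd by blast
qed

lemma opt_end:
  assumes f: "feasible A b u x" and ns: "\<nexists>y. sd_step A b c u x y"
  shows "optimal A b c u x"
  unfolding optimal_def
proof (intro conjI allI impI f, rule ccontr)
  fix y assume fy: "feasible A b u y" and lt: "\<not> rvec c \<bullet> x \<le> rvec c \<bullet> y"
  define z where "z = y - x"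
  have kz: "rmat A *v z = 0" unfolding z_def by (rule feas_diff_kernel[OF f fy])
  have z0: "z \<noteq> 0" using lt by (auto simp: z_def)
  have az: "applicable A b u x z" unfolding applicable_def z_def
    by (intro exI[of _ 1]) (simp add: fy)
  have rz: "ratio c z > 0" unfolding ratio_def using lt norm1_pos[OF z0]
    by (simp add: z_def inner_diff_right)
  obtain h0 where h0: "h0 \<in> circuits A" "applicable A b u x (rvec h0)" "ratio c (rvec h0) \<ge> ratio c z"
    using part1[OF f kz z0 az] by blast
  define AC where "AC = {g \<in> circuits A. applicable A b u x (rvec g)}"
  have fin: "finite AC" unfolding AC_def by (rule finite_subset[OF _ circuits_finite[of A]]) auto
  have h0AC: "h0 \<in> AC" using h0 by (simp add: AC_def)
  define M where "M = Max ((\<lambda>g. ratio c (rvec g)) ` AC)"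
  have "M \<in> (\<lambda>g. ratio c (rvec g)) ` AC" unfolding M_def using fin h0AC by (intro Max_in) auto
  then obtain g where gAC: "g \<in> AC" and gM: "ratio c (rvec g) = M" by auto
  have gmax: "\<forall>h\<in>circuits A. applicable A b u x (rvec h) \<longrightarrow> ratio c (rvec h) \<le> ratio c (rvec g)"
    using fin gM unfolding M_def AC_def by auto
  have gpos: "ratio c (rvec g) > 0" using gmax h0 rz by force
  have gc: "g \<in> circuits A" and ga: "applicable A b u x (rvec g)" using gAC by (auto simp: AC_def)
  define G where "G = rvec g"
  have kG: "rmat A *v G = 0" using circuit_min_supp[OF gc] by (simp add: G_def min_supp_kernel_def)
  have G0: "G \<noteq> 0" using circuit_min_supp[OF gc] by (simp add: G_def rvec_eq0)
  define S where "S = supp G"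
  have Sne: "S \<noteq> {}" using G0 by (auto simp: S_def supp_def vec_eq_iff)
  define bnd where "bnd j = (if G$j > 0 then (real_of_int (u$j) - x$j) / G$j else - x$j / G$j)" for j
  define \<alpha> where "\<alpha> = Min (bnd ` S)"
  have fx: "0 \<le> x$j" "x$j \<le> real_of_int (u$j)" for j using feas_comp[OF f] by auto
  have bnn: "0 \<le> bnd j" if "j \<in> S" for j
  proof -
    have "G$j \<noteq> 0" using that by (simp add: S_def supp_def)
    then show ?thesis using fx[of j] unfolding bnd_def
      by (auto simp: divide_nonneg_pos divide_nonneg_neg)
  qed
  have ain: "\<alpha> \<in> bnd ` S" unfolding \<alpha>_def using Sne by (intro Min_in) auto
  have a0: "0 \<le> \<alpha>" using ain bnn by auto
  have ale: "\<alpha> \<le> bnd j" if "j \<in> S" for j unfolding \<alpha>_def using that by (intro Min_le) auto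
  have feas: "feasible A b u (x + \<alpha> *\<^sub>R G)"
    unfolding feasible_def
  proof (rule conjI)
    show "rmat A *v (x + \<alpha> *\<^sub>R G) = rvec b" using f kG
      by (simp add: feasible_def algebra_simps)
  next
    show "\<forall>j. 0 \<le> (x + \<alpha> *\<^sub>R G) $ j \<and> (x + \<alpha> *\<^sub>R G) $ j \<le> real_of_int (u$j)"
    proof
    fix j
    consider "G$j = 0" | "G$j > 0" | "G$j < 0" by linarith
    then show "0 \<le> (x + \<alpha> *\<^sub>R G) $ j \<and> (x + \<alpha> *\<^sub>R G) $ j \<le> real_of_int (u$j)"
    proof cases
      case 1 then show ?thesis using fx[of j] by simp
    next
      case 2
      then have "j \<in> S" by (simp add: S_def supp_def)
      then have "\<alpha> \<le> (real_of_int (u$j) - x$j) / G$j" using ale[OF \<open>j \<in> S\<close>] 2 by (simp add: bnd_def)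
      then have "\<alpha> * G$j \<le> real_of_int (u$j) - x$j" using 2 by (simp add: pos_le_divide_eq)
      moreover have "0 \<le> \<alpha> * G$j" using a0 2 by simp
      ultimately show ?thesis using fx[of j] by simp
    next
      case 3
      then have "j \<in> S" by (simp add: S_def supp_def)
      then have "\<alpha> \<le> - x$j / G$j" using ale[OF \<open>j \<in> S\<close>] 3 by (simp add: bnd_def)
      then have "(- x$j / G$j) * G$j \<le> \<alpha> * G$j" using 3 by (intro mult_right_mono_neg) auto
      then have "- x$j \<le> \<alpha> * G$j" using 3 by simp
      moreover have "\<alpha> * G$j \<le> 0" using a0 3 by (simp add: mult_nonneg_nonpos)
      ultimately show ?thesis using fx[of j] by simp
    qed
    qed
  qed
  have amax: "\<forall>a. feasible A b u (x + a *\<^sub>R G) \<longrightarrow> a \<le> \<alpha>"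
  proof (intro allI impI)
    fix a assume fa: "feasible A b u (x + a *\<^sub>R G)"
    have "a \<le> bnd j" if "j \<in> S" for j
    proof -
      have fj: "0 \<le> x$j + a * G$j" "x$j + a * G$j \<le> real_of_int (u$j)"
        using feas_comp[OF fa, of j] by auto
      have "G$j \<noteq> 0" using that by (simp add: S_def supp_def)
      then consider "G$j > 0" | "G$j < 0" by linarith
      then show ?thesis
      proof cases
        case 1
        then have "a * G$j \<le> real_of_int (u$j) - x$j" using fj by simp
        then show ?thesis using 1 by (simp add: bnd_def pos_le_divide_eq)
      next
        case 2
        then have "- x$j \<le> a * G$j" using fj by simp
        then have "(a * G$j) / G$j \<le> (- x$j) / G$j" using 2 by (intro divide_right_mono_neg) auto
        then show ?thesis using 2 by (simp add: bnd_def)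
      qed
    qed
    then show "a \<le> \<alpha>" unfolding \<alpha>_def using Sne by (simp add: Min_ge_iff)
  qed
  have "sd_step A b c u x (x + \<alpha> *\<^sub>R G)"
    unfolding sd_step_def using gc ga gmax gpos feas amax unfolding G_def by blast
  then show False using ns by blast
qed



theorem theorem2:
  fixes A :: "int^'n^'d" and b :: "int^'d" and c :: "int^'n" and u :: "int^'n"
  assumes "\<forall>i. u $ i \<ge> 0"
  shows
    "(\<forall>x z. feasible A b u x \<and> z \<noteq> 0 \<and> rmat A *v z = 0 \<and> applicable A b u x z \<longrightarrow>
        (\<exists>g \<in> circuits A. applicable A b u x (rvec g) \<and> ratio c (rvec g) \<ge> ratio c z))
     \<and>
     (\<forall>x0. feasible A b u x0 \<longrightarrow>
        (\<forall>(xs :: nat \<Rightarrow> real^'n) k. xs 0 = x0 \<and> (\<forall>i<k. sd_step A b c u (xs i) (xs (Suc i))) \<longrightarrow>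
            k \<le> card (circuits A) \<and>
            ((\<nexists>y. sd_step A b c u (xs k) y) \<longrightarrow> optimal A b c u (xs k))))"
proof (rule conjI)
  show "\<forall>x z. feasible A b u x \<and> z \<noteq> 0 \<and> rmat A *v z = 0 \<and> applicable A b u x z \<longrightarrow>
        (\<exists>g \<in> circuits A. applicable A b u x (rvec g) \<and> ratio c (rvec g) \<ge> ratio c z)"
    using part1 by blast
next
  show "\<forall>x0. feasible A b u x0 \<longrightarrow>
        (\<forall>(xs :: nat \<Rightarrow> real^'n) k. xs 0 = x0 \<and> (\<forall>i<k. sd_step A b c u (xs i) (xs (Suc i))) \<longrightarrow>
            k \<le> card (circuits A) \<and>
            ((\<nexists>y. sd_step A b c u (xs k) y) \<longrightarrow> optimal A b c u (xs k)))"
  proof (intro allI impI)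
    fix x0 and xs :: "nat \<Rightarrow> real^'n" and k
    assume f0: "feasible A b u x0"
      and H: "xs 0 = x0 \<and> (\<forall>i<k. sd_step A b c u (xs i) (xs (Suc i)))"
    then have x0: "xs 0 = x0" and st: "\<And>i. i < k \<Longrightarrow> sd_step A b c u (xs i) (xs (Suc i))" by auto
    have feas: "feasible A b u (xs l)" if "l \<le> k" for l
      using that
    proof (induction l)
      case 0 then show ?case using f0 x0 by simp
    next
      case (Suc l)
      then have "l < k" by simp
      then show ?case using step_info[OF st Suc.IH] \<open>l < k\<close> by auto
    qed
    define P where "P l g \<alpha> \<longleftrightarrow> g \<in> circuits A \<and> applicable A b u (xs l) (rvec g) \<and>
     (\<forall>h\<in>circuits A. applicable A b u (xs l) (rvec h) \<longrightarrow> ratio c (rvec h) \<le> ratio c (rvec g)) \<and>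
     ratio c (rvec g) > 0 \<and> xs (Suc l) = xs l + \<alpha> *\<^sub>R rvec g \<and> \<alpha> > 0 \<and>
     (\<exists>j. (rvec g $ j > 0 \<and> xs (Suc l) $ j \<ge> real_of_int (u$j)) \<or> (rvec g $ j < 0 \<and> xs (Suc l) $ j \<le> 0))"
      for l g \<alpha>
    have ex: "\<forall>l. l < k \<longrightarrow> (\<exists>g \<alpha>. P l g \<alpha>)"
    proof (intro allI impI)
      fix l assume "l < k"
      then show "\<exists>g \<alpha>. P l g \<alpha>" using step_info[OF st feas, of l] unfolding P_def by auto
    qed
    then obtain gg aa where Pg: "\<forall>l. l < k \<longrightarrow> P l (gg l) (aa l)" by metis
    have gc: "gg l \<in> circuits A" and ga: "applicable A b u (xs l) (rvec (gg l))"
      and gmax: "\<forall>h\<in>circuits A. applicable A b u (xs l) (rvec h) \<longrightarrow> ratio c (rvec h) \<le> ratio c (rvec (gg l))"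
      and gpos: "ratio c (rvec (gg l)) > 0" and xstep: "xs (Suc l) = xs l + aa l *\<^sub>R rvec (gg l)"
      and apos: "aa l > 0"
      and gbnd: "\<exists>j. (rvec (gg l) $ j > 0 \<and> xs (Suc l) $ j \<ge> real_of_int (u$j)) \<or> (rvec (gg l) $ j < 0 \<and> xs (Suc l) $ j \<le> 0)"
      if "l < k" for l
      using Pg that unfolding P_def by blast+
    have G0: "rvec (gg l) \<noteq> 0" if "l < k" for l
      using circuit_min_supp(2)[OF gc[OF that]] by (simp add: rvec_eq0)
    define \<delta> where "\<delta> l = ratio c (rvec (gg l))" for l
    have cG: "- (rvec c \<bullet> rvec (gg l)) = \<delta> l * norm1 (rvec (gg l))" if "l < k" for l
      unfolding \<delta>_def by (rule ratio_eq[OF G0[OF that]])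
    have cG': "rvec c \<bullet> rvec (gg l) = - (\<delta> l * norm1 (rvec (gg l)))" if "l < k" for l
      using cG[OF that] by simp
    have mono1: "\<delta> (Suc l) \<le> \<delta> l" if sl: "Suc l < k" for l
    proof -
      have lk: "l < k" using sl by simp
      define G1 where "G1 = rvec (gg l)"
      define G2 where "G2 = rvec (gg (Suc l))"
      obtain e where e: "e > 0" "feasible A b u (xs (Suc l) + e *\<^sub>R G2)"
        using ga[OF sl] unfolding applicable_def G2_def by blast
      define z where "z = (xs (Suc l) + e *\<^sub>R G2) - xs l"
      have zeq: "z = aa l *\<^sub>R G1 + e *\<^sub>R G2" unfolding z_def G1_def using xstep[OF lk] by simp
      have kz: "rmat A *v z = 0" unfolding z_def by (rule feas_diff_kernel[OF feas e(2)]) (use lk in simp)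
      have az: "applicable A b u (xs l) z" unfolding applicable_def z_def
        by (intro exI[of _ 1]) (simp add: e(2))
      have s: "- (rvec c \<bullet> z) \<le> \<delta> l * norm1 z"
        unfolding \<delta>_def by (rule steep[OF feas gc[OF lk] gmax[OF lk] kz az]) (use lk in simp)
      have N1: "norm1 G1 > 0" using norm1_pos[OF G0[OF lk]] by (simp add: G1_def)
      have N2: "norm1 G2 > 0" using norm1_pos[OF G0[OF sl]] by (simp add: G2_def)
      have nz: "norm1 z \<le> aa l * norm1 G1 + e * norm1 G2"
        using norm1_tri[of "aa l *\<^sub>R G1" "e *\<^sub>R G2"] apos[OF lk] e(1)
        by (simp add: zeq norm1_scale)
      have dpos: "\<delta> l > 0" using gpos[OF lk] by (simp add: \<delta>_def)
      have eqz: "- (rvec c \<bullet> z) = aa l * (\<delta> l * norm1 G1) + e * (\<delta> (Suc l) * norm1 G2)"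
        using cG'[OF lk] cG'[OF sl] by (simp add: zeq inner_add_right G1_def G2_def)
      have "\<delta> l * norm1 z \<le> \<delta> l * (aa l * norm1 G1 + e * norm1 G2)"
        using nz dpos by (intro mult_left_mono) auto
      then have "aa l * (\<delta> l * norm1 G1) + e * (\<delta> (Suc l) * norm1 G2) \<le> \<delta> l * (aa l * norm1 G1 + e * norm1 G2)"
        using eqz s by linarith
      then have "e * (\<delta> (Suc l) * norm1 G2) \<le> e * (\<delta> l * norm1 G2)" by (simp add: algebra_simps)
      then have "\<delta> (Suc l) * norm1 G2 \<le> \<delta> l * norm1 G2" using e(1) by simp
      then show ?thesis using N2 by simp
    qed
    have mono: "\<delta> l \<le> \<delta> i" if "i \<le> l" "l < k" for i l
      using that
    proof (induction l)
      case 0 then show ?case by simp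
    next
      case (Suc l)
      show ?case
      proof (cases "i = Suc l")
        case True then show ?thesis by simp
      next
        case False
        then have "i \<le> l" using Suc.prems by simp
        then show ?thesis using Suc.IH Suc.prems mono1[of l] by fastforce
      qed
    qed
    have noreuse: "gg i \<noteq> gg m" if im: "i < m" "m < k" for i m
    proof
      assume eq: "gg i = gg m"
      have ik: "i < k" using im by simp
      define G where "G = rvec (gg i)"
      define d where "d = \<delta> i"
      define \<alpha> where "\<alpha> = aa i"
      have dpos: "d > 0" using gpos[OF ik] by (simp add: d_def \<delta>_def)
      have apos': "\<alpha> > 0" using apos[OF ik] by (simp add: \<alpha>_def)
      obtain \<epsilon> where \<epsilon>: "\<epsilon> > 0" "feasible A b u (xs m + \<epsilon> *\<^sub>R G)"
        using ga[OF im(2)] eq unfolding applicable_def G_def by auto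
      have dl: "d \<le> \<delta> l" if lm: "l \<le> m" for l
        using mono[OF lm im(2)] eq by (simp add: d_def \<delta>_def)
      define W where "W = xs m - xs (Suc i)"
      have Wdom: "d * norm1 (xs l - xs (Suc i)) \<le> - (rvec c \<bullet> (xs l - xs (Suc i)))"
        if "Suc i \<le> l" "l \<le> m" for l
        using that
      proof (induction l)
        case 0 then show ?case by simp
      next
        case (Suc l)
        show ?case
        proof (cases "Suc i = Suc l")
          case True then show ?thesis by (simp add: norm1_def)
        next
          case False
          then have il: "Suc i \<le> l" "l < m" using Suc.prems by auto
          then have lk: "l < k" using im by simp
          define D where "D = xs l - xs (Suc i)"
          define V where "V = aa l *\<^sub>R rvec (gg l)"
          have eqD: "xs (Suc l) - xs (Suc i) = D + V" unfolding D_def V_def using xstep[OF lk] by simp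
          have IH: "d * norm1 D \<le> - (rvec c \<bullet> D)" using Suc.IH il unfolding D_def by simp
          have "- (rvec c \<bullet> V) = aa l * (\<delta> l * norm1 (rvec (gg l)))"
            using cG'[OF lk] by (simp add: V_def)
          moreover have "aa l * (d * norm1 (rvec (gg l))) \<le> aa l * (\<delta> l * norm1 (rvec (gg l)))"
            using dl[of l] il apos[OF lk] norm1_nonneg[of "rvec (gg l)"]
            by (intro mult_left_mono mult_right_mono) auto
          moreover have "norm1 V = aa l * norm1 (rvec (gg l))"
            using apos[OF lk] by (simp add: V_def norm1_scale)
          ultimately have IV: "d * norm1 V \<le> - (rvec c \<bullet> V)" by (simp add: algebra_simps)
          have "d * norm1 (D + V) \<le> d * (norm1 D + norm1 V)"
            using norm1_tri[of D V] dpos by simp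
          then show ?thesis using IH IV eqD by (simp add: inner_add_right algebra_simps)
        qed
      qed
      have WD: "d * norm1 W \<le> - (rvec c \<bullet> W)" unfolding W_def using Wdom[of m] im by simp
      define Pv where "Pv = (\<alpha> + \<epsilon>) *\<^sub>R G"
      have NG: "norm1 Pv = (\<alpha> + \<epsilon>) * norm1 G" using apos' \<epsilon>(1) by (simp add: Pv_def norm1_scale)
      have cP: "- (rvec c \<bullet> Pv) = d * norm1 Pv"
        using cG'[OF ik] NG by (simp add: Pv_def G_def d_def)
      define z where "z = (xs m + \<epsilon> *\<^sub>R G) - xs i"
      have zeq: "z = Pv + W" unfolding z_def Pv_def W_def G_def \<alpha>_def using xstep[OF ik]
        by (simp add: algebra_simps)
      have kz: "rmat A *v z = 0" unfolding z_def by (rule feas_diff_kernel[OF feas \<epsilon>(2)]) (use ik in simp)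
      have az: "applicable A b u (xs i) z" unfolding applicable_def z_def
        by (intro exI[of _ 1]) (simp add: \<epsilon>(2))
      have s: "- (rvec c \<bullet> z) \<le> d * norm1 z"
        unfolding d_def \<delta>_def by (rule steep[OF feas gc[OF ik] gmax[OF ik] kz az]) (use ik in simp)
      have "d * (norm1 Pv + norm1 W) \<le> - (rvec c \<bullet> z)"
        using cP WD by (simp add: zeq inner_add_right algebra_simps)
      then have "d * (norm1 Pv + norm1 W) \<le> d * norm1 (Pv + W)" using s zeq by simp
      then have sum_le: "norm1 Pv + norm1 W \<le> norm1 (Pv + W)" using dpos by simp
      have coord: "\<bar>Pv$j\<bar> + \<bar>W$j\<bar> = \<bar>Pv$j + W$j\<bar>" for j
      proof -
        let ?f = "\<lambda>j. \<bar>Pv$j\<bar> + \<bar>W$j\<bar> - \<bar>Pv$j + W$j\<bar>"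
        have nn: "\<forall>j\<in>UNIV. 0 \<le> ?f j" by (simp add: abs_triangle_ineq)
        have "sum ?f UNIV = norm1 Pv + norm1 W - norm1 (Pv + W)"
          by (simp add: norm1_def sum.distrib sum_subtractf)
        then have "sum ?f UNIV \<le> 0" using sum_le by simp
        moreover have "0 \<le> sum ?f UNIV" using nn by (simp add: sum_nonneg)
        ultimately have "sum ?f UNIV = 0" by simp
        then have "\<forall>j\<in>UNIV. ?f j = 0" using sum_nonneg_eq_0_iff[of UNIV ?f] nn by simp
        then show ?thesis by simp
      qed
      obtain j where j: "(G $ j > 0 \<and> xs (Suc i) $ j \<ge> real_of_int (u$j)) \<or> (G $ j < 0 \<and> xs (Suc i) $ j \<le> 0)"
        using gbnd[OF ik] unfolding G_def by blast
      have fm: "0 \<le> xs m $ j + \<epsilon> * G$j" "xs m $ j + \<epsilon> * G$j \<le> real_of_int (u$j)"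
        using feas_comp[OF \<epsilon>(2), of j] by auto
      have Wj: "W$j = xs m $ j - xs (Suc i) $ j" by (simp add: W_def)
      have Pj: "Pv$j = (\<alpha> + \<epsilon>) * G$j" by (simp add: Pv_def)
      have ae: "\<alpha> + \<epsilon> > 0" using apos' \<epsilon>(1) by simp
      from j show False
      proof
        assume a: "G $ j > 0 \<and> xs (Suc i) $ j \<ge> real_of_int (u$j)"
        then have "Pv$j > 0" using Pj ae by simp
        then have "W$j \<ge> 0" using coord[of j] by (smt (verit))
        moreover have "\<epsilon> * G$j > 0" using a \<epsilon>(1) by simp
        ultimately show False using fm a Wj by simp
      next
        assume a: "G $ j < 0 \<and> xs (Suc i) $ j \<le> 0"
        then have "Pv$j < 0" using Pj ae by (simp add: mult_pos_neg)
        then have "W$j \<le> 0" using coord[of j] by (smt (verit))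
        moreover have "\<epsilon> * G$j < 0" using a \<epsilon>(1) by (simp add: mult_pos_neg)
        ultimately show False using fm a Wj by simp
      qed
    qed
    have inj: "inj_on gg {..<k}"
    proof (rule inj_onI)
      fix i m assume "i \<in> {..<k}" "m \<in> {..<k}" "gg i = gg m"
      then show "i = m" using noreuse by (metis lessThan_iff linorder_neq_iff)
    qed
    have sub: "gg ` {..<k} \<subseteq> circuits A" using gc by auto
    have "k \<le> card (circuits A)"
      using card_inj_on_le[OF inj sub circuits_finite] by simp
    moreover have "(\<nexists>y. sd_step A b c u (xs k) y) \<longrightarrow> optimal A b c u (xs k)"
      using opt_end[OF feas] by simp
    ultimately show "k \<le> card (circuits A) \<and> ((\<nexists>y. sd_step A b c u (xs k) y) \<longrightarrow> optimal A b c u (xs k))"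
      by blast
  qed
qed


end
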